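(* Let $(G,c)$ be a W-state graph and let $G_m=(V(G),E_m(G))$ be the spanning subgraph consisting of all monochromatic edges. Then $G_m$ is the disjoint union of exactly two connected components, each of which is factor-critical.
   Context: Graphs may have parallel edges but no loops. A half-edge $2$-colouring $c$ of $G$ assigns to each pair $(e,w)$ with $w$ an endpoint of edge $e$ a colour in $\{0,1\}$ (0 = blue, 1 = red). An edge $e=uv$ is bichromatic if $c(e,u)\neq c(e,v)$ and monochromatic otherwise; $E_m(G)$ is the set of monochromatic edges; standing convention: monochromatic edges are blue at both ends. A graph is matching-covered if every edge lies in some perfect matching. A W-state graph is a half-edge $2$-coloured matching-covered graph $(G,c)$ in which every perfect matching contains exactly one bichromatic edge, and every vertex $v$ is incident with an edge $e$ with $c(e,v)=1$. A graph $F$ is factor-critical if $F-u$ has a perfect matching for every vertex $u$. *)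

theory Defs
  imports Main
begin

text \<open>A finite multigraph without loops: vertex set V, edge set E (edges are abstract
  objects, so parallel edges are allowed), and ends e = set of the two endpoints of e.\<close>
definition multigraph :: "'v set \<Rightarrow> 'e set \<Rightarrow> ('e \<Rightarrow> 'v set) \<Rightarrow> bool" where
  "multigraph V E ends \<longleftrightarrow> finite V \<and> finite E \<and>
     (\<forall>e\<in>E. ends e \<subseteq> V \<and> card (ends e) = 2)"

definition perfect_matching :: "'v set \<Rightarrow> 'e set \<Rightarrow> ('e \<Rightarrow> 'v set) \<Rightarrow> 'e set \<Rightarrow> bool" where
  "perfect_matching V E ends M \<longleftrightarrow> M \<subseteq> E \<and> (\<forall>v\<in>V. \<exists>!e. e \<in> M \<and> v \<in> ends e)"

definition matching_covered :: "'v set \<Rightarrow> 'e set \<Rightarrow> ('e \<Rightarrow> 'v set) \<Rightarrow> bool" where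
  "matching_covered V E ends \<longleftrightarrow> (\<forall>e\<in>E. \<exists>M. perfect_matching V E ends M \<and> e \<in> M)"

text \<open>Half-edge 2-colouring: c e v for v an endpoint of e; False = 0 = blue, True = 1 = red.\<close>
definition bichromatic :: "('e \<Rightarrow> 'v set) \<Rightarrow> ('e \<Rightarrow> 'v \<Rightarrow> bool) \<Rightarrow> 'e \<Rightarrow> bool" where
  "bichromatic ends c e \<longleftrightarrow> (\<exists>u\<in>ends e. \<exists>v\<in>ends e. c e u \<noteq> c e v)"

definition mono_edges :: "'e set \<Rightarrow> ('e \<Rightarrow> 'v set) \<Rightarrow> ('e \<Rightarrow> 'v \<Rightarrow> bool) \<Rightarrow> 'e set" where
  "mono_edges E ends c = {e \<in> E. \<not> bichromatic ends c e}"

definition W_state :: "'v set \<Rightarrow> 'e set \<Rightarrow> ('e \<Rightarrow> 'v set) \<Rightarrow> ('e \<Rightarrow> 'v \<Rightarrow> bool) \<Rightarrow> bool" where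
  "W_state V E ends c \<longleftrightarrow> multigraph V E ends \<and> matching_covered V E ends \<and>
     (\<forall>M. perfect_matching V E ends M \<longrightarrow> card {e \<in> M. bichromatic ends c e} = 1) \<and>
     (\<forall>v\<in>V. \<exists>e\<in>E. v \<in> ends e \<and> c e v)"

definition adj :: "'e set \<Rightarrow> ('e \<Rightarrow> 'v set) \<Rightarrow> 'v \<Rightarrow> 'v \<Rightarrow> bool" where
  "adj E ends u v \<longleftrightarrow> (\<exists>e\<in>E. ends e = {u, v})"

definition components :: "'v set \<Rightarrow> 'e set \<Rightarrow> ('e \<Rightarrow> 'v set) \<Rightarrow> 'v set set" where
  "components V E ends = {{v \<in> V. (adj E ends)\<^sup>*\<^sup>* u v} | u. u \<in> V}"

definition factor_critical :: "'v set \<Rightarrow> 'e set \<Rightarrow> ('e \<Rightarrow> 'v set) \<Rightarrow> bool" where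
  "factor_critical V E ends \<longleftrightarrow> (\<forall>u\<in>V. \<exists>M.
     perfect_matching (V - {u}) {e \<in> E. ends e \<subseteq> V - {u}} ends M)"

end

theory Submission
  imports Defs
begin

definition mtch :: "'e set \<Rightarrow> ('e \<Rightarrow> 'v set) \<Rightarrow> 'e set \<Rightarrow> bool" where
  "mtch F ends M \<longleftrightarrow> M \<subseteq> F \<and> (\<forall>e\<in>M. \<forall>e'\<in>M. e \<noteq> e' \<longrightarrow> ends e \<inter> ends e' = {})"

definition cov :: "('e \<Rightarrow> 'v set) \<Rightarrow> 'e set \<Rightarrow> 'v set" where
  "cov ends M = \<Union>(ends ` M)"

lemma cov_insert[simp]: "cov ends (insert e M) = ends e \<union> cov ends M"
  by (simp add: cov_def)

lemma cov_remove: "mtch F ends M \<Longrightarrow> e \<in> M \<Longrightarrow> cov ends (M - {e}) = cov ends M - ends e"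
  unfolding mtch_def cov_def by blast

lemma mtch_unique: "mtch F ends M \<Longrightarrow> e \<in> M \<Longrightarrow> e' \<in> M \<Longrightarrow> x \<in> ends e \<Longrightarrow> x \<in> ends e' \<Longrightarrow> e = e'"
  unfolding mtch_def by blast

lemma cov_sub: "mtch F ends M \<Longrightarrow> \<forall>e\<in>F. ends e \<subseteq> V \<and> card (ends e) = 2 \<Longrightarrow> cov ends M \<subseteq> V"
  unfolding mtch_def cov_def by blast

lemma two_elems: "card A = 2 \<Longrightarrow> x \<in> A \<Longrightarrow> \<exists>y. y \<noteq> x \<and> A = {x,y}"
  by (metis card_2_iff doubleton_eq_iff insertE singletonD)

lemma card_swap: "finite X \<Longrightarrow> b \<in> X \<Longrightarrow> w \<notin> X \<Longrightarrow> card (insert w (X - {b})) = card X"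
  by (metis card.insert card_Diff1_less card_Suc_Diff1 finite_Diff insert_Diff_single insert_absorb insert_iff not_less_iff_gr_or_eq)

lemma exch:
  fixes V :: "'v set" and F :: "'e set"
  assumes finV: "finite V" and finF: "finite F"
    and gr: "\<forall>e\<in>F. ends e \<subseteq> V \<and> card (ends e) = 2"
    and noPM: "\<forall>M. mtch F ends M \<longrightarrow> cov ends M \<noteq> V"
  shows "card (M - N) = n \<Longrightarrow> mtch F ends M \<Longrightarrow> mtch F ends N \<Longrightarrow> card (V - cov ends N) = 2
    \<Longrightarrow> w \<in> cov ends M \<Longrightarrow> w \<notin> cov ends N \<Longrightarrow>
    \<exists>M'. mtch F ends M' \<and> M \<inter> N \<subseteq> M' \<and> w \<notin> cov ends M' \<and>
       card (V - cov ends M') = card (V - cov ends M) \<and> (\<exists>z. V - cov ends M \<subseteq> insert z (V - cov ends M'))"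
proof (induction n arbitrary: N w rule: less_induct)
  case (less n)
  note mM = less.prems(2) and mN = less.prems(3) and cN = less.prems(4) and wM = less.prems(5)
    and wN = less.prems(6)
  from wM obtain e where eM: "e \<in> M" and we: "w \<in> ends e" by (auto simp: cov_def)
  have eF: "e \<in> F" using mM eM by (auto simp: mtch_def)
  then obtain a where ea: "ends e = {w,a}" "a \<noteq> w" using gr we two_elems by metis
  have wV: "w \<in> V" and aV: "a \<in> V" using gr eF ea by auto
  have eN: "e \<notin> N" using wN we by (auto simp: cov_def)
  have covM: "cov ends M \<subseteq> V" using cov_sub[OF mM gr] .
  have covN: "cov ends N \<subseteq> V" using cov_sub[OF mN gr] .
  show ?case
  proof (cases "a \<in> cov ends N")
    case False
    have m2: "mtch F ends (insert e N)" using mN eF ea False wN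
      unfolding mtch_def cov_def by auto
    have eq: "V - cov ends (insert e N) = (V - cov ends N) - {w,a}" using ea by auto
    have "card ((V - cov ends N) - {w,a}) = 0"
      using cN ea wV aV False wN finV by (subst card_Diff_subset) auto
    hence "V - cov ends (insert e N) = {}" using eq finV by simp
    hence "cov ends (insert e N) = V" using cov_sub[OF m2 gr] by blast
    thus ?thesis using noPM m2 by blast
  next
    case True
    note aN = True
    then obtain g where gN: "g \<in> N" and ag: "a \<in> ends g" by (auto simp: cov_def)
    have gF: "g \<in> F" using mN gN by (auto simp: mtch_def)
    then obtain b where gb: "ends g = {a,b}" "b \<noteq> a" using gr ag two_elems by metis
    have bV: "b \<in> V" using gr gF gb by auto
    have bN: "b \<in> cov ends N" using gN gb by (auto simp: cov_def)
    have bw: "b \<noteq> w" using bN wN by auto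
    have ge: "g \<noteq> e" using gN eN by auto
    have gM: "g \<notin> M" using mtch_unique[OF mM eM _ _ ag] ea ge by auto
    show ?thesis
    proof (cases "b \<in> cov ends M")
      case False
      let ?M' = "insert g (M - {e})"
      have m1: "mtch F ends ?M'"
        using mM gF unfolding mtch_def
      proof (intro conjI)
        show "?M' \<subseteq> F" using mM gF by (auto simp: mtch_def)
        show "\<forall>x\<in>?M'. \<forall>y\<in>?M'. x \<noteq> y \<longrightarrow> ends x \<inter> ends y = {}"
        proof (intro ballI impI)
          fix x y assume x: "x \<in> ?M'" and y: "y \<in> ?M'" and xy: "x \<noteq> y"
          have key: "ends g \<inter> ends h = {}" if h: "h \<in> M - {e}" for h
          proof -
            have "a \<notin> ends h" using mtch_unique[OF mM eM, of h a] h ea by auto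
            moreover have "b \<notin> ends h" using False h by (auto simp: cov_def)
            ultimately show ?thesis using gb by auto
          qed
          show "ends x \<inter> ends y = {}"
          proof (cases "x = g")
            case True thus ?thesis using key y xy by auto
          next
            case False
            show ?thesis
            proof (cases "y = g")
              case True thus ?thesis using key x xy False by auto
            next
              case False
              thus ?thesis using \<open>x \<noteq> g\<close> x y xy mM by (auto simp: mtch_def)
            qed
          qed
        qed
      qed
      have c1: "cov ends ?M' = {a,b} \<union> (cov ends M - {w,a})"
        using cov_remove[OF mM eM] gb ea by simp
      have wM': "w \<notin> cov ends ?M'" using c1 bw ea by auto
      have eqV: "V - cov ends ?M' = insert w ((V - cov ends M) - {b})"
        using c1 wV bV False wM ea gb bw eM by (auto simp: cov_def)
      have "card (V - cov ends ?M') = card (V - cov ends M)"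
        unfolding eqV using finV bV False wM by (intro card_swap) auto
      moreover have "V - cov ends M \<subseteq> insert b (V - cov ends ?M')" using eqV by auto
      moreover have "M \<inter> N \<subseteq> ?M'" using eN by auto
      ultimately show ?thesis using m1 wM' by blast
    next
      case True
      let ?N1 = "insert e (N - {g})"
      have mN1: "mtch F ends ?N1"
      proof -
        have key: "ends e \<inter> ends h = {}" if h: "h \<in> N - {g}" for h
        proof -
          have "a \<notin> ends h" using mtch_unique[OF mN gN, of h a] h ag by auto
          moreover have "w \<notin> ends h" using wN h by (auto simp: cov_def)
          ultimately show ?thesis using ea by auto
        qed
        show ?thesis unfolding mtch_def
        proof (intro conjI ballI impI)
          show "?N1 \<subseteq> F" using mN eF by (auto simp: mtch_def)
          fix x y assume x: "x \<in> ?N1" and y: "y \<in> ?N1" and xy: "x \<noteq> y"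
          show "ends x \<inter> ends y = {}"
          proof (cases "x = e")
            case True thus ?thesis using key y xy by auto
          next
            case False
            show ?thesis
            proof (cases "y = e")
              case True thus ?thesis using key x xy False by auto
            next
              case False
              thus ?thesis using \<open>x \<noteq> e\<close> x y xy mN by (auto simp: mtch_def)
            qed
          qed
        qed
      qed
      have c1: "cov ends ?N1 = {w,a} \<union> (cov ends N - {a,b})"
        using cov_remove[OF mN gN] gb ea by simp
      have bN1: "b \<notin> cov ends ?N1" using c1 bw gb by auto
      have eqV: "V - cov ends ?N1 = insert b ((V - cov ends N) - {w})"
        unfolding c1 using wV bV wN bN ea gb bw aN by auto
      have cN1: "card (V - cov ends ?N1) = 2"
        unfolding eqV using finV bV bN wV wN cN by (subst card_swap) auto
      have finM: "finite M" using mM finF by (auto simp: mtch_def intro: finite_subset)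
      have "M - ?N1 = (M - N) - {e}" using gM by auto
      hence lt: "card (M - ?N1) < n" using less.prems(1) eM eN finM
        by (metis DiffI card_Diff1_less finite_Diff)
      have IH: "\<exists>M'. mtch F ends M' \<and> M \<inter> ?N1 \<subseteq> M' \<and> b \<notin> cov ends M' \<and>
       card (V - cov ends M') = card (V - cov ends M) \<and> (\<exists>z. V - cov ends M \<subseteq> insert z (V - cov ends M'))"
        by (rule less.IH[OF lt refl mM mN1 cN1 True bN1])
      then obtain M'' z where M'': "mtch F ends M''" "M \<inter> ?N1 \<subseteq> M''" "b \<notin> cov ends M''"
        "card (V - cov ends M'') = card (V - cov ends M)"
        and z: "V - cov ends M \<subseteq> insert z (V - cov ends M'')"
        by (elim exE conjE) blast
      have eM'': "e \<in> M''" using M''(2) eM by auto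
      let ?M' = "insert g (M'' - {e})"
      have m1: "mtch F ends ?M'"
      proof -
        have key: "ends g \<inter> ends h = {}" if h: "h \<in> M'' - {e}" for h
        proof -
          have "a \<notin> ends h" using mtch_unique[OF M''(1) eM'', of h a] h ea by auto
          moreover have "b \<notin> ends h" using M''(3) h by (auto simp: cov_def)
          ultimately show ?thesis using gb by auto
        qed
        show ?thesis unfolding mtch_def
        proof (intro conjI ballI impI)
          show "?M' \<subseteq> F" using M''(1) gF by (auto simp: mtch_def)
          fix x y assume x: "x \<in> ?M'" and y: "y \<in> ?M'" and xy: "x \<noteq> y"
          show "ends x \<inter> ends y = {}"
          proof (cases "x = g")
            case True thus ?thesis using key y xy by auto
          next
            case False
            show ?thesis
            proof (cases "y = g")
              case True thus ?thesis using key x xy False by auto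
            next
              case False
              thus ?thesis using \<open>x \<noteq> g\<close> x y xy M''(1) by (auto simp: mtch_def)
            qed
          qed
        qed
      qed
      have c2: "cov ends ?M' = {a,b} \<union> (cov ends M'' - {w,a})"
        using cov_remove[OF M''(1) eM''] gb ea by simp
      have wM': "w \<notin> cov ends ?M'" using c2 bw ea by auto
      have wM'': "w \<in> cov ends M''" using eM'' ea by (auto simp: cov_def)
      have aM'': "a \<in> cov ends M''" using eM'' ea by (auto simp: cov_def)
      have eqV2: "V - cov ends ?M' = insert w ((V - cov ends M'') - {b})"
        unfolding c2 using aM'' wV bV M''(3) wM'' ea gb bw by auto
      have "card (V - cov ends ?M') = card (V - cov ends M)"
        unfolding eqV2 using finV bV M''(3) wM'' M''(4) by (subst card_swap) auto
      moreover have "V - cov ends M \<subseteq> insert z (V - cov ends ?M')"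
        using z eqV2 True by auto
      moreover have "M \<inter> N \<subseteq> ?M'" using M''(2) eN gM by auto
      ultimately show ?thesis using m1 wM' by blast
    qed
  qed
qed


lemma gallai:
  fixes V :: "'v set" and F :: "'e set"
  assumes finV: "finite V" and finF: "finite F"
    and gr: "\<forall>e\<in>F. ends e \<subseteq> V \<and> card (ends e) = 2"
    and noPM: "\<forall>M. mtch F ends M \<longrightarrow> cov ends M \<noteq> V"
    and near: "\<forall>v\<in>V. \<exists>N. mtch F ends N \<and> card (V - cov ends N) = 2 \<and> v \<notin> cov ends N"
  shows "((adj F ends)^^n) u v \<Longrightarrow> mtch F ends M \<Longrightarrow> V - cov ends M = {u,v} \<Longrightarrow> u \<noteq> v \<Longrightarrow> False"
proof (induction n arbitrary: M u v rule: less_induct)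
  case (less n)
  have sym: "adj F ends x y \<Longrightarrow> adj F ends y x" for x y
    by (auto simp: adj_def insert_commute)
  show False
  proof (cases n)
    case 0 then show False using less.prems by simp
  next
    case (Suc m)
    then obtain w where uw: "adj F ends u w" and wv: "((adj F ends)^^m) w v"
      using less.prems(1) relpowp_Suc_D2 by metis
    from uw obtain e where eF: "e \<in> F" and ee: "ends e = {u,w}" by (auto simp: adj_def)
    have "card {u,w} = 2" using gr eF ee by auto
    hence uw': "u \<noteq> w" by (cases "u = w") auto
    have wV: "w \<in> V" using gr eF ee by auto
    have uV: "u \<in> V" and vV: "v \<in> V" and uM: "u \<notin> cov ends M" and vM: "v \<notin> cov ends M"
      using less.prems(3) by auto
    have cM: "cov ends M \<subseteq> V" using cov_sub[OF less.prems(2) gr] .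
    show False
    proof (cases "w = v")
      case True
      have m2: "mtch F ends (insert e M)" using less.prems(2) eF ee uM vM True
        unfolding mtch_def cov_def by auto
      have "cov ends (insert e M) = V" using ee True cM less.prems(3) by auto
      thus False using noPM m2 by blast
    next
      case False
      have wM: "w \<in> cov ends M" using wV False uw' less.prems(3) by auto
      obtain N where N: "mtch F ends N" "card (V - cov ends N) = 2" "w \<notin> cov ends N"
        using near wV by blast
      have "\<exists>M'. mtch F ends M' \<and> M \<inter> N \<subseteq> M' \<and> w \<notin> cov ends M' \<and>
       card (V - cov ends M') = card (V - cov ends M) \<and> (\<exists>z. V - cov ends M \<subseteq> insert z (V - cov ends M'))"
        by (rule exch[OF finV finF gr noPM refl less.prems(2) N(1) N(2) wM N(3)])
      then obtain M' where M': "mtch F ends M'" "w \<notin> cov ends M'"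
        "card (V - cov ends M') = card (V - cov ends M)" and z0: "\<exists>z. V - cov ends M \<subseteq> insert z (V - cov ends M')"
        by blast
      from z0 obtain z where z: "V - cov ends M \<subseteq> insert z (V - cov ends M')" by blast
      have "card (V - cov ends M) = 2" unfolding less.prems(3) using less.prems(4) by simp
      hence c2: "card (V - cov ends M') = 2" using M'(3) by simp
      have wM': "w \<in> V - cov ends M'" using wV M'(2) by simp
      obtain y where y: "y \<noteq> w" "V - cov ends M' = {w,y}" using two_elems[OF c2 wM'] by blast
      have m1: "m \<noteq> 0" using False wv by (cases m) auto
      show False
      proof (cases "u \<in> V - cov ends M'")
        case True
        hence "V - cov ends M' = {w,u}" using y uw' by auto
        moreover have "((adj F ends)^^1) w u" using sym[OF uw] by (auto intro: relcomppI)
        moreover have "1 < n" using Suc m1 by simp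
        ultimately show False using less.IH[of 1 w u M'] M'(1) uw' by blast
      next
        case False
        hence "v \<in> V - cov ends M'" using z less.prems(3,4) by auto
        hence "V - cov ends M' = {w,v}" using y \<open>w \<noteq> v\<close> by auto
        moreover have "m < n" using Suc by simp
        ultimately show False using less.IH[of m w v M'] M'(1) wv \<open>w \<noteq> v\<close> by blast
      qed
    qed
  qed
qed

lemma restr:
  assumes "mtch F ends N" "\<forall>e\<in>F. card (ends e) = 2" "\<forall>x\<in>C. \<forall>y. adj F ends x y \<longrightarrow> y \<in> C"
  shows "cov ends {e\<in>N. ends e \<subseteq> C} = C \<inter> cov ends N"
proof
  show "cov ends {e\<in>N. ends e \<subseteq> C} \<subseteq> C \<inter> cov ends N" by (auto simp: cov_def)
  show "C \<inter> cov ends N \<subseteq> cov ends {e\<in>N. ends e \<subseteq> C}"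
  proof
    fix x assume x: "x \<in> C \<inter> cov ends N"
    then obtain e where e: "e \<in> N" "x \<in> ends e" by (auto simp: cov_def)
    have eF: "e \<in> F" using assms(1) e by (auto simp: mtch_def)
    then obtain y where y: "ends e = {x,y}" using two_elems assms(2) e by metis
    have "adj F ends x y" using eF y by (auto simp: adj_def)
    hence "y \<in> C" using assms(3) x by blast
    hence "ends e \<subseteq> C" using y x by auto
    thus "x \<in> cov ends {e\<in>N. ends e \<subseteq> C}" using e by (auto simp: cov_def)
  qed
qed

lemma mtch_subset: "mtch F ends M \<Longrightarrow> M' \<subseteq> M \<Longrightarrow> mtch F ends M'"
  unfolding mtch_def by blast

lemma even_cov:
  assumes "mtch F ends M" "finite M" "\<forall>e\<in>F. card (ends e) = 2"
  shows "card (cov ends M) = 2 * card M"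
proof -
  have MF: "M \<subseteq> F" using assms(1) by (auto simp: mtch_def)
  have "card (cov ends M) = (\<Sum>e\<in>M. card (ends e))"
    unfolding cov_def
  proof (rule card_UN_disjoint[OF assms(2)])
    show "\<forall>i\<in>M. finite (ends i)" using MF assms(3) by (metis card.infinite subsetD zero_neq_numeral)
    show "\<forall>i\<in>M. \<forall>j\<in>M. i \<noteq> j \<longrightarrow> ends i \<inter> ends j = {}" using assms(1) by (auto simp: mtch_def)
  qed
  also have "\<dots> = (\<Sum>e\<in>M. 2)" using MF assms(3) by (intro sum.cong) auto
  finally show ?thesis by simp
qed

theorem mainTheorem8:
  fixes V :: "'v set" and E :: "'e set" and ends :: "'e \<Rightarrow> 'v set"
    and c :: "'e \<Rightarrow> 'v \<Rightarrow> bool"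
  assumes "W_state V E ends c"
    and "\<forall>e\<in>mono_edges E ends c. \<forall>v\<in>ends e. \<not> c e v"
  shows "card (components V (mono_edges E ends c) ends) = 2 \<and>
    (\<forall>C\<in>components V (mono_edges E ends c) ends.
       factor_critical C {e \<in> mono_edges E ends c. ends e \<subseteq> C} ends)"
proof -
  let ?F = "mono_edges E ends c"
  let ?R = "adj ?F ends"
  have mg: "multigraph V E ends" and mc: "matching_covered V E ends"
    and pm1: "\<forall>M. perfect_matching V E ends M \<longrightarrow> card {e \<in> M. bichromatic ends c e} = 1"
    and red: "\<forall>v\<in>V. \<exists>e\<in>E. v \<in> ends e \<and> c e v"
    using assms(1) unfolding W_state_def by auto
  have finV: "finite V" and finE: "finite E" and grE: "\<forall>e\<in>E. ends e \<subseteq> V \<and> card (ends e) = 2"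
    using mg unfolding multigraph_def by auto
  have FE: "?F \<subseteq> E" by (auto simp: mono_edges_def)
  have finF: "finite ?F" using finE FE finite_subset by blast
  have gr: "\<forall>e\<in>?F. ends e \<subseteq> V \<and> card (ends e) = 2" using grE FE by blast
  have gr2: "\<forall>e\<in>?F. card (ends e) = 2" using gr by blast
  have noPM: "\<forall>M. mtch ?F ends M \<longrightarrow> cov ends M \<noteq> V"
  proof (intro allI impI notI)
    fix M assume mM: "mtch ?F ends M" and cM: "cov ends M = V"
    have MF: "M \<subseteq> ?F" using mM by (auto simp: mtch_def)
    have "perfect_matching V E ends M" unfolding perfect_matching_def
    proof (intro conjI ballI)
      show "M \<subseteq> E" using MF FE by blast
      fix v assume "v \<in> V"
      then obtain e where "e \<in> M" "v \<in> ends e" using cM by (auto simp: cov_def)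
      thus "\<exists>!e. e \<in> M \<and> v \<in> ends e" using mtch_unique[OF mM] by blast
    qed
    hence "card {e \<in> M. bichromatic ends c e} = 1" using pm1 by blast
    moreover have "{e \<in> M. bichromatic ends c e} = {}" using MF by (auto simp: mono_edges_def)
    ultimately show False by simp
  qed
  have near: "\<forall>v\<in>V. \<exists>N. mtch ?F ends N \<and> card (V - cov ends N) = 2 \<and> v \<notin> cov ends N"
  proof
    fix v assume vV: "v \<in> V"
    obtain f where fE: "f \<in> E" and vf: "v \<in> ends f" and cf: "c f v" using red vV by blast
    have "f \<notin> ?F" using assms(2) vf cf by blast
    hence fb: "bichromatic ends c f" using fE by (auto simp: mono_edges_def)
    obtain P where pmP: "perfect_matching V E ends P" and fP: "f \<in> P"
      using mc fE unfolding matching_covered_def by blast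
    have PE: "P \<subseteq> E" and uq: "\<forall>x\<in>V. \<exists>!e. e \<in> P \<and> x \<in> ends e"
      using pmP unfolding perfect_matching_def by auto
    have "card {e \<in> P. bichromatic ends c e} = 1" using pm1 pmP by blast
    then obtain x where "{e \<in> P. bichromatic ends c e} = {x}" using card_1_singletonE by blast
    hence B: "{e \<in> P. bichromatic ends c e} = {f}" using fP fb by auto
    let ?N = "P - {f}"
    have uq2: "e = e'" if "e \<in> P" "e' \<in> P" "x \<in> ends e" "x \<in> ends e'" for e e' x
    proof -
      have "x \<in> V" using that PE grE by blast
      thus ?thesis using uq that by blast
    qed
    have mN: "mtch ?F ends ?N" unfolding mtch_def
    proof (intro conjI ballI impI)
      show "?N \<subseteq> ?F"
      proof
        fix e assume e: "e \<in> ?N"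
        have "\<not> bichromatic ends c e" using B e by auto
        thus "e \<in> ?F" using e PE by (auto simp: mono_edges_def)
      qed
      fix e e' assume "e \<in> ?N" "e' \<in> ?N" "e \<noteq> e'"
      thus "ends e \<inter> ends e' = {}" using uq2 by blast
    qed
    have covN: "cov ends ?N = V - ends f"
    proof
      show "cov ends ?N \<subseteq> V - ends f"
      proof
        fix x assume "x \<in> cov ends ?N"
        then obtain e where e: "e \<in> P" "e \<noteq> f" "x \<in> ends e" by (auto simp: cov_def)
        have "x \<in> V" using e PE grE by blast
        moreover have "x \<notin> ends f" using uq2[OF e(1) fP e(3)] e(2) by blast
        ultimately show "x \<in> V - ends f" by blast
      qed
      show "V - ends f \<subseteq> cov ends ?N"
      proof
        fix x assume x: "x \<in> V - ends f"
        then obtain e where "e \<in> P" "x \<in> ends e" using uq by blast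
        thus "x \<in> cov ends ?N" using x by (auto simp: cov_def)
      qed
    qed
    have "V - cov ends ?N = ends f" using covN grE fE by blast
    hence "card (V - cov ends ?N) = 2" using grE fE by simp
    moreover have "v \<notin> cov ends ?N" using covN vf by blast
    ultimately show "\<exists>N. mtch ?F ends N \<and> card (V - cov ends N) = 2 \<and> v \<notin> cov ends N"
      using mN by blast
  qed
  have gal: "\<not> ?R\<^sup>*\<^sup>* u v" if "mtch ?F ends N" "V - cov ends N = {u,v}" "u \<noteq> v" for N u v
  proof
    assume "?R\<^sup>*\<^sup>* u v"
    from rtranclp_imp_relpowp[OF this] obtain n where rn: "(?R ^^ n) u v" by (elim exE)
    show False using gallai[OF finV finF gr noPM near rn that(1) that(2) that(3)] .
  qed
  have Rsym: "?R x y \<Longrightarrow> ?R y x" for x y by (auto simp: adj_def insert_commute)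
  have Rstar_sym: "?R\<^sup>*\<^sup>* x y \<Longrightarrow> ?R\<^sup>*\<^sup>* y x" for x y
  proof (induction rule: rtranclp_induct)
    case base then show ?case by simp
  next
    case (step y z) then show ?case using Rsym converse_rtranclp_into_rtranclp by metis
  qed
  have RV: "?R x y \<Longrightarrow> y \<in> V" for x y using gr by (auto simp: adj_def)
  define comp where "comp u = {v\<in>V. ?R\<^sup>*\<^sup>* u v}" for u
  have compeq: "?R\<^sup>*\<^sup>* a b \<Longrightarrow> comp a = comp b" for a b
  proof -
    assume ab: "?R\<^sup>*\<^sup>* a b"
    have ba: "?R\<^sup>*\<^sup>* b a" using Rstar_sym[OF ab] .
    show ?thesis unfolding comp_def
    proof (intro set_eqI iffI)
      fix x assume "x \<in> {v \<in> V. ?R\<^sup>*\<^sup>* a v}"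
      thus "x \<in> {v \<in> V. ?R\<^sup>*\<^sup>* b v}" using rtranclp_trans[OF ba] by blast
    next
      fix x assume "x \<in> {v \<in> V. ?R\<^sup>*\<^sup>* b v}"
      thus "x \<in> {v \<in> V. ?R\<^sup>*\<^sup>* a v}" using rtranclp_trans[OF ab] by blast
    qed
  qed
  have closed: "\<forall>x\<in>comp u. \<forall>y. ?R x y \<longrightarrow> y \<in> comp u" for u
    unfolding comp_def using RV by (auto intro: rtranclp.rtrancl_into_rtrancl)
  have compV: "comp u \<subseteq> V" for u unfolding comp_def by blast
  have comps: "components V ?F ends = comp ` V"
    unfolding components_def comp_def by auto
  have fc: "\<exists>M. perfect_matching (comp u0 - {z}) {e \<in> {e\<in>?F. ends e \<subseteq> comp u0}. ends e \<subseteq> comp u0 - {z}} ends M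
     \<and> mtch ?F ends M \<and> cov ends M = comp u0 - {z}" if z: "z \<in> comp u0" for u0 z
  proof -
    have zV: "z \<in> V" using z compV by blast
    obtain N where N: "mtch ?F ends N" "card (V - cov ends N) = 2" "z \<notin> cov ends N"
      using near zV by blast
    obtain z' where z': "z' \<noteq> z" "V - cov ends N = {z,z'}" using two_elems[OF N(2)] zV N(3) by blast
    have nz: "\<not> ?R\<^sup>*\<^sup>* z z'" using gal[OF N(1) z'(2)] z'(1) by blast
    have "z' \<notin> comp u0"
    proof
      assume "z' \<in> comp u0"
      hence "?R\<^sup>*\<^sup>* u0 z'" and "?R\<^sup>*\<^sup>* u0 z" using z unfolding comp_def by auto
      hence "?R\<^sup>*\<^sup>* z z'" using Rstar_sym rtranclp_trans by metis
      thus False using nz by blast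
    qed
    let ?M = "{e\<in>N. ends e \<subseteq> comp u0}"
    have eqx: "x \<notin> cov ends N \<longleftrightarrow> x = z \<or> x = z'" if "x \<in> V" for x
      using z'(2) that unfolding set_eq_iff by blast
    have cM: "cov ends ?M = comp u0 - {z}"
      unfolding restr[OF N(1) gr2 closed]
    proof (intro set_eqI iffI)
      fix x assume "x \<in> comp u0 \<inter> cov ends N"
      thus "x \<in> comp u0 - {z}" using N(3) by auto
    next
      fix x assume x: "x \<in> comp u0 - {z}"
      hence "x \<in> V" "x \<noteq> z'" using compV \<open>z' \<notin> comp u0\<close> by auto
      thus "x \<in> comp u0 \<inter> cov ends N" using eqx x by auto
    qed
    have mM: "mtch ?F ends ?M" by (rule mtch_subset[OF N(1)]) auto
    have "perfect_matching (comp u0 - {z}) {e \<in> {e\<in>?F. ends e \<subseteq> comp u0}. ends e \<subseteq> comp u0 - {z}} ends ?M"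
      unfolding perfect_matching_def
    proof (intro conjI ballI)
      show "?M \<subseteq> {e \<in> {e\<in>?F. ends e \<subseteq> comp u0}. ends e \<subseteq> comp u0 - {z}}"
        using N(1) N(3) by (auto simp: mtch_def cov_def)
      fix x assume "x \<in> comp u0 - {z}"
      then obtain e where "e \<in> ?M" "x \<in> ends e" using cM by (auto simp: cov_def)
      thus "\<exists>!e. e \<in> ?M \<and> x \<in> ends e" using mtch_unique[OF mM] by blast
    qed
    thus ?thesis using mM cM by blast
  qed
  have evenc: "even (card (cov ends M))" if "mtch ?F ends M" for M
  proof -
    have "finite M" using that finF by (auto simp: mtch_def intro: finite_subset)
    thus ?thesis using even_cov[OF that _ gr2] by simp
  qed
  have "V \<noteq> {}"
  proof
    assume "V = {}"
    hence "perfect_matching V E ends {}" by (simp add: perfect_matching_def)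
    thus False using pm1 by fastforce
  qed
  then obtain x0 where x0: "x0 \<in> V" by blast
  obtain N0 where N0: "mtch ?F ends N0" "card (V - cov ends N0) = 2" "x0 \<notin> cov ends N0"
    using near x0 by blast
  obtain y0 where y0: "y0 \<noteq> x0" "V - cov ends N0 = {x0,y0}" using two_elems[OF N0(2)] x0 N0(3) by blast
  have y0V: "y0 \<in> V" using y0 by blast
  have nxy: "\<not> ?R\<^sup>*\<^sup>* x0 y0" using gal[OF N0(1) y0(2)] y0(1) by blast
  have all: "?R\<^sup>*\<^sup>* x0 z \<or> ?R\<^sup>*\<^sup>* y0 z" if zV: "z \<in> V" for z
  proof (rule ccontr)
    assume nz: "\<not> (?R\<^sup>*\<^sup>* x0 z \<or> ?R\<^sup>*\<^sup>* y0 z)"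
    have x0C: "x0 \<notin> comp z" using nz Rstar_sym unfolding comp_def by blast
    have y0C: "y0 \<notin> comp z" using nz Rstar_sym unfolding comp_def by blast
    let ?M1 = "{e\<in>N0. ends e \<subseteq> comp z}"
    have eqx: "x \<notin> cov ends N0 \<longleftrightarrow> x = x0 \<or> x = y0" if "x \<in> V" for x
      using y0(2) that unfolding set_eq_iff by blast
    have "cov ends ?M1 = comp z"
      unfolding restr[OF N0(1) gr2 closed]
    proof (intro set_eqI iffI)
      fix x assume "x \<in> comp z \<inter> cov ends N0"
      thus "x \<in> comp z" by auto
    next
      fix x assume x: "x \<in> comp z"
      hence "x \<in> V" "x \<noteq> x0" "x \<noteq> y0" using compV x0C y0C by auto
      thus "x \<in> comp z \<inter> cov ends N0" using eqx x by auto
    qed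
    moreover have "mtch ?F ends ?M1" by (rule mtch_subset[OF N0(1)]) auto
    ultimately have e1: "even (card (comp z))" using evenc by metis
    have zC: "z \<in> comp z" using zV unfolding comp_def by simp
    obtain M2 where "mtch ?F ends M2" "cov ends M2 = comp z - {z}" using fc[OF zC] by blast
    hence e2: "even (card (comp z - {z}))" using evenc by metis
    have "finite (comp z)" using finV compV finite_subset by blast
    hence "card (comp z) = card (comp z - {z}) + 1" using zC by (metis card_Suc_Diff1 Suc_eq_plus1)
    thus False using e1 e2 by simp
  qed
  have neq: "comp x0 \<noteq> comp y0"
  proof
    assume "comp x0 = comp y0"
    moreover have "y0 \<in> comp y0" using y0V unfolding comp_def by simp
    ultimately show False using nxy unfolding comp_def by blast
  qed
  have cv: "comp ` V = {comp x0, comp y0}"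
  proof
    show "comp ` V \<subseteq> {comp x0, comp y0}" using all compeq by blast
    show "{comp x0, comp y0} \<subseteq> comp ` V" using x0 y0V by blast
  qed
  have "card (components V ?F ends) = 2" unfolding comps cv using neq by simp
  moreover have "\<forall>C\<in>components V ?F ends. factor_critical C {e \<in> ?F. ends e \<subseteq> C} ends"
  proof
    fix C assume "C \<in> components V ?F ends"
    then obtain u0 where C: "C = comp u0" unfolding comps by blast
    show "factor_critical C {e \<in> ?F. ends e \<subseteq> C} ends"
      unfolding factor_critical_def C using fc by blast
  qed
  ultimately show ?thesis by blast
qed

end
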